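(* Let $s\ge2$ and let $G$ be a $K_{2,s}$-free graph. Then $G$ is strongly $d$-degenerate, where $d=d(G):=\lfloor 2s\,\nabla_1(G)\rfloor$.
   Context: A graph $H$ is a shallow minor of $G$ at depth $r$ (integer $r\ge0$) if there are disjoint sets $V_1,\dots,V_p\subseteq V(G)$ such that each $G[V_i]$ contains a vertex $x_i$ with every vertex of $V_i$ at distance at most $r$ from $x_i$ in $G[V_i]$, and $H$ is (isomorphic to) a subgraph of the graph obtained by contracting each $V_i$ to a single vertex (two contracted vertices adjacent iff some edge joins the corresponding sets). $\nabla_r(G)$ is the maximum of $e(H)/v(H)$ over all non-empty shallow minors $H$ of $G$ at depth $r$. A graph is $K_{2,s}$-free if it has no subgraph isomorphic to $K_{2,s}$. For an integer $d\ge1$, a vertex $v$ of $G$ is $d$-removable in $G$ if $d_G(v)\le d$ and at most one neighbour $w$ of $v$ has $d_G(w)>d$; $G$ is strongly $d$-degenerate if every non-empty subgraph $G'$ of $G$ contains a vertex $d$-removable in $G'$. *)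

theory Defs
  imports Complex_Main
begin

definition sgraph :: "'a set \<Rightarrow> ('a \<Rightarrow> 'a \<Rightarrow> bool) \<Rightarrow> bool" where
  "sgraph V E \<longleftrightarrow> finite V \<and> (\<forall>x y. E x y \<longrightarrow> x \<in> V \<and> y \<in> V \<and> x \<noteq> y \<and> E y x)"

definition subgraph :: "'a set \<Rightarrow> ('a \<Rightarrow> 'a \<Rightarrow> bool) \<Rightarrow> 'a set \<Rightarrow> ('a \<Rightarrow> 'a \<Rightarrow> bool) \<Rightarrow> bool" where
  "subgraph V' E' V E \<longleftrightarrow> sgraph V' E' \<and> V' \<subseteq> V \<and> (\<forall>x y. E' x y \<longrightarrow> E x y)"

definition degree :: "'a set \<Rightarrow> ('a \<Rightarrow> 'a \<Rightarrow> bool) \<Rightarrow> 'a \<Rightarrow> nat" where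
  "degree V E v = card {w \<in> V. E v w}"

definition num_edges :: "('a \<Rightarrow> 'a \<Rightarrow> bool) \<Rightarrow> nat" where
  "num_edges E = card {{x, y} | x y. E x y}"

definition K2s_free :: "nat \<Rightarrow> 'a set \<Rightarrow> ('a \<Rightarrow> 'a \<Rightarrow> bool) \<Rightarrow> bool" where
  "K2s_free s V E \<longleftrightarrow>
     \<not> (\<exists>a b S. a \<in> V \<and> b \<in> V \<and> a \<noteq> b \<and> S \<subseteq> V - {a, b} \<and> card S = s \<and> finite S \<and>
              (\<forall>x\<in>S. E a x \<and> E b x))"

definition dist_le :: "'a set \<Rightarrow> ('a \<Rightarrow> 'a \<Rightarrow> bool) \<Rightarrow> 'a \<Rightarrow> 'a \<Rightarrow> nat \<Rightarrow> bool" where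
  "dist_le S E c v r \<longleftrightarrow> (\<exists>xs. xs \<noteq> [] \<and> hd xs = c \<and> last xs = v \<and> set xs \<subseteq> S \<and>
      length xs \<le> r + 1 \<and> (\<forall>i. Suc i < length xs \<longrightarrow> E (xs ! i) (xs ! Suc i)))"

text \<open>A shallow minor at depth r, given by a set C of branch-set centres, the branch sets B c
  (c \<in> C), and the minor H = (W, F): W a non-empty set of centres, F a subset of the edges
  of the contracted graph on W. Branch sets are labelled by their centres (they are disjoint).\<close>
definition shallow_minor_data ::
  "nat \<Rightarrow> 'a set \<Rightarrow> ('a \<Rightarrow> 'a \<Rightarrow> bool) \<Rightarrow> 'a set \<Rightarrow> ('a \<Rightarrow> 'a set) \<Rightarrow> 'a set \<Rightarrow> ('a \<Rightarrow> 'a \<Rightarrow> bool) \<Rightarrow> bool" where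
  "shallow_minor_data r V E C B W F \<longleftrightarrow>
     (\<forall>c\<in>C. c \<in> B c \<and> B c \<subseteq> V \<and> (\<forall>v\<in>B c. dist_le (B c) E c v r)) \<and>
     (\<forall>c\<in>C. \<forall>c'\<in>C. c \<noteq> c' \<longrightarrow> B c \<inter> B c' = {}) \<and>
     W \<subseteq> C \<and> W \<noteq> {} \<and> sgraph W F \<and>
     (\<forall>c c'. F c c' \<longrightarrow> (\<exists>x\<in>B c. \<exists>y\<in>B c'. E x y))"

definition nabla :: "nat \<Rightarrow> 'a set \<Rightarrow> ('a \<Rightarrow> 'a \<Rightarrow> bool) \<Rightarrow> real" where
  "nabla r V E = Max {real (num_edges F) / real (card W) | C B W F. shallow_minor_data r V E C B W F}"

definition d_removable :: "nat \<Rightarrow> 'a set \<Rightarrow> ('a \<Rightarrow> 'a \<Rightarrow> bool) \<Rightarrow> 'a \<Rightarrow> bool" where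
  "d_removable d V E v \<longleftrightarrow> v \<in> V \<and> degree V E v \<le> d \<and>
     card {w \<in> V. E v w \<and> degree V E w > d} \<le> 1"

definition strongly_degenerate :: "nat \<Rightarrow> 'a set \<Rightarrow> ('a \<Rightarrow> 'a \<Rightarrow> bool) \<Rightarrow> bool" where
  "strongly_degenerate d V E \<longleftrightarrow>
     (\<forall>V' E'. subgraph V' E' V E \<and> V' \<noteq> {} \<longrightarrow> (\<exists>v\<in>V'. d_removable d V' E' v))"

end

theory Submission
  imports Defs
begin

lemma nabla_set_finite:
  assumes fin: "finite V"
  shows "finite {real (num_edges F) / real (card W) | C B W F. shallow_minor_data r V E C B W F}"
proof -
  have "{real (num_edges F) / real (card W) | C B W F. shallow_minor_data r V E C B W F}
     \<subseteq> (\<lambda>(m,k). real m / real k) ` ({..(2::nat)^card V} \<times> {..card V})"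
  proof clarify
    fix C B W F assume smd: "shallow_minor_data r V E C B W F"
    have WV: "W \<subseteq> V" using smd unfolding shallow_minor_data_def by blast
    have finW: "finite W" using WV fin finite_subset by blast
    have sub: "{{x, y} | x y. F x y} \<subseteq> Pow W" using smd unfolding shallow_minor_data_def sgraph_def by blast
    have "num_edges F \<le> card (Pow W)" unfolding num_edges_def
      using card_mono[OF _ sub] finW by simp
    also have "\<dots> = 2 ^ card W" using finW card_Pow by blast
    also have "\<dots> \<le> 2 ^ card V" using card_mono[OF fin WV] by (simp add: power_increasing)
    finally have "num_edges F \<le> 2 ^ card V" .
    moreover have "card W \<le> card V" using card_mono[OF fin WV] .
    ultimately show "real (num_edges F) / real (card W) \<in> (\<lambda>(m,k). real m / real k) ` ({..(2::nat)^card V} \<times> {..card V})"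
      by (intro image_eqI[where x="(num_edges F, card W)"]) auto
  qed
  then show ?thesis by (rule finite_subset) auto
qed

lemma core:
  assumes G: "sgraph V E" and s2: "s \<ge> 2" and K: "K2s_free s V E"
    and sub: "subgraph V' E' V E" and ne: "V' \<noteq> {}"
    and nr: "\<forall>v\<in>V'. \<not> d_removable d V' E' v"
    and dd: "d = nat \<lfloor>2 * real s * nabla 1 V E\<rfloor>"
  shows False
proof -
  from sub have G': "sgraph V' E'" and VV: "V' \<subseteq> V" and EE: "\<And>x y. E' x y \<Longrightarrow> E x y"
    unfolding subgraph_def by auto
  have finV': "finite V'" using G' sgraph_def by auto
  have finV: "finite V" using G sgraph_def by auto
  have E'in: "\<And>x y. E' x y \<Longrightarrow> x \<in> V' \<and> y \<in> V' \<and> x \<noteq> y \<and> E' y x"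
    using G' unfolding sgraph_def by blast
  define H where "H = {v \<in> V'. degree V' E' v > d}"
  define L where "L = V' - H"
  define NH where "NH w = {u \<in> V'. E' w u \<and> degree V' E' u > d}" for w
  have NHH: "NH w \<subseteq> H" for w by (auto simp: NH_def H_def)
  have finH: "finite H" using finV' H_def by simp
  have HV: "H \<subseteq> V'" using H_def by auto
  have Hne: "H \<noteq> {}"
  proof
    assume H0: "H = {}"
    from ne obtain v where v: "v \<in> V'" by auto
    have e: "{w \<in> V'. E' v w \<and> d < degree V' E' w} = {}" using NHH H0 unfolding NH_def by blast
    have "\<not> d < degree V' E' v" using H0 v H_def by blast
    then have "d_removable d V' E' v" using v unfolding d_removable_def e by simp
    with nr v show False by blast
  qed
  have two: "\<exists>p q. p \<noteq> q \<and> p \<in> NH w \<and> q \<in> NH w" if "w \<in> L" for w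
  proof -
    have "w \<in> V'" "\<not> degree V' E' w > d" using that L_def H_def by auto
    hence "\<not> card (NH w) \<le> 1" using nr unfolding d_removable_def NH_def by auto
    hence "card (NH w) \<ge> 2" by simp
    then obtain S where "S \<subseteq> NH w" "card S = 2" by (meson obtain_subset_with_card_n)
    then show ?thesis by (auto simp: card_2_iff)
  qed
  obtain px qx where pq: "\<And>w. w \<in> L \<Longrightarrow> px w \<noteq> qx w \<and> px w \<in> NH w \<and> qx w \<in> NH w"
    using two by metis
  define B where "B x = insert x {w \<in> L. px w = x}" for x
  define F where "F x y \<longleftrightarrow> x \<in> H \<and> y \<in> H \<and> x \<noteq> y \<and> (\<exists>a\<in>B x. \<exists>b\<in>B y. E' a b)" for x y
  define g where "g x w = (if w \<in> H then w else if px w \<noteq> x then px w else qx w)" for x w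
  define P where "P = Sigma H (\<lambda>x. {w \<in> V'. E' x w})"
  define CN where "CN a b = {w \<in> V'. E' a w \<and> E' b w}" for a b
  define Ed where "Ed = {{x, y} | x y. F x y}"
  define f where "f p = {fst p, g (fst p) (snd p)}" for p
  have gprop: "g x w \<in> H \<and> g x w \<noteq> x \<and> F x (g x w) \<and> (w = g x w \<or> w \<in> CN x (g x w))"
    if xw: "(x,w) \<in> P" for x w
  proof -
    have xH: "x \<in> H" and wV: "w \<in> V'" and Exw: "E' x w" using xw P_def by auto
    show ?thesis
    proof (cases "w \<in> H")
      case True
      then show ?thesis using xH Exw E'in[OF Exw] unfolding g_def F_def B_def by auto
    next
      case False
      then have wL: "w \<in> L" using wV L_def by auto
      note pqw = pq[OF wL]
      show ?thesis
      proof (cases "px w = x")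
        case False
        have "px w \<in> H" using pqw NHH by blast
        moreover have "E' w (px w)" using pqw NH_def by auto
        ultimately show ?thesis using False \<open>w \<notin> H\<close> xH Exw wV wL E'in[of w "px w"]
          unfolding g_def F_def B_def CN_def by auto
      next
        case True
        have "qx w \<in> H" using pqw NHH by blast
        moreover have "E' w (qx w)" using pqw NH_def by auto
        ultimately show ?thesis using True pqw \<open>w \<notin> H\<close> xH Exw wV wL E'in[of w "qx w"]
          unfolding g_def F_def B_def CN_def by auto
      qed
    qed
  qed
  have CNcard: "card (CN a b) \<le> s - 1" if "a \<noteq> b" "a \<in> V'" "b \<in> V'" for a b
  proof (rule ccontr)
    assume "\<not> card (CN a b) \<le> s - 1"
    hence "s \<le> card (CN a b)" by simp
    then obtain S where S: "S \<subseteq> CN a b" "card S = s" by (meson obtain_subset_with_card_n)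
    have finS: "finite S" using S s2 card.infinite by fastforce
    have "S \<subseteq> V - {a, b}" using S VV E'in unfolding CN_def by blast
    moreover have "\<forall>x\<in>S. E a x \<and> E b x" using S EE unfolding CN_def by blast
    ultimately show False using K that VV S finS unfolding K2s_free_def by blast
  qed
  have finP: "finite P" unfolding P_def using finH finV' by auto
  have fiber: "card {p \<in> P. f p = e} \<le> 2 * s" if "e \<in> f ` P" for e
  proof -
    from that obtain x0 w0 where xw0: "(x0,w0) \<in> P" "e = {x0, g x0 w0}" unfolding f_def by auto
    define a where "a = x0"
    define b where "b = g x0 w0"
    have ab: "a \<noteq> b" "a \<in> V'" "b \<in> V'" using gprop[OF xw0(1)] xw0 HV P_def a_def b_def by auto
    have "{p \<in> P. f p = e} \<subseteq> {(a,b),(b,a)} \<union> ({a,b} \<times> CN a b)"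
    proof
      fix p assume p: "p \<in> {p \<in> P. f p = e}"
      obtain x w where pxw: "p = (x,w)" by (cases p)
      have xwP: "(x,w) \<in> P" and fe: "{x, g x w} = {a,b}" using p pxw xw0 a_def b_def f_def by auto
      note gp = gprop[OF xwP]
      have "(x = a \<and> g x w = b) \<or> (x = b \<and> g x w = a)" using fe gp by (auto simp: doubleton_eq_iff)
      moreover have "CN a b = CN b a" unfolding CN_def by auto
      ultimately show "p \<in> {(a,b),(b,a)} \<union> ({a,b} \<times> CN a b)" using gp pxw by auto
    qed
    moreover have "finite ({(a,b),(b,a)} \<union> ({a,b} \<times> CN a b))" using finV' CN_def by auto
    ultimately have "card {p \<in> P. f p = e} \<le> card ({(a,b),(b,a)} \<union> ({a,b} \<times> CN a b))"
      by (rule card_mono[rotated])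
    also have "\<dots> \<le> card {(a,b),(b,a)} + card ({a,b} \<times> CN a b)" by (rule card_Un_le)
    also have "\<dots> \<le> 2 + 2 * (s - 1)"
      using CNcard[OF ab] ab by (simp add: card_cartesian_product card_insert_if)
    also have "\<dots> = 2 * s" using s2 by simp
    finally show ?thesis .
  qed
  have cardP: "card P = (\<Sum>x\<in>H. degree V' E' x)"
    unfolding P_def degree_def using finH finV' by (subst card_SigmaI) auto
  have low: "card H * (d+1) \<le> card P"
    unfolding cardP using sum_bounded_below[of H "d+1" "\<lambda>x. degree V' E' x"] H_def by auto
  have eqP: "(\<Union>e\<in>f ` P. {p \<in> P. f p = e}) = P" by blast
  have u: "card (\<Union>e\<in>f ` P. {p \<in> P. f p = e}) \<le> (\<Sum>e\<in>f ` P. card {p \<in> P. f p = e})"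
    by (intro card_UN_le finite_imageI finP)
  have "card P \<le> (\<Sum>e\<in>f ` P. card {p \<in> P. f p = e})" using u by (simp only: eqP)
  also have "\<dots> \<le> card (f ` P) * (2 * s)" 
    using sum_bounded_above[of "f ` P" "\<lambda>e. card {p \<in> P. f p = e}" "2*s"] fiber by simp
  finally have up: "card P \<le> card (f ` P) * (2 * s)" .
  have fPEd: "f ` P \<subseteq> Ed"
  proof
    fix e assume "e \<in> f ` P"
    then obtain x w where xw: "(x,w) \<in> P" "e = f (x,w)" by auto
    then have "e = {x, g x w}" "F x (g x w)" using gprop[OF xw(1)] f_def by auto
    then show "e \<in> Ed" unfolding Ed_def by blast
  qed
  have finEd: "finite Ed"
  proof -
    have "Ed \<subseteq> Pow H" unfolding Ed_def F_def by auto
    then show ?thesis using finH finite_subset by blast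
  qed
  have m: "card (f ` P) \<le> num_edges F" unfolding num_edges_def using card_mono[OF finEd fPEd] Ed_def by simp
  have smd: "shallow_minor_data 1 V E H B H F"
    unfolding shallow_minor_data_def
  proof (intro conjI ballI allI impI)
    fix c v assume c: "c \<in> H" and v: "v \<in> B c"
    show "dist_le (B c) E c v 1"
    proof (cases "v = c")
      case True
      then show ?thesis unfolding dist_le_def using v by (intro exI[of _ "[c]"]) auto
    next
      case False
      then have "v \<in> L" "px v = c" using v B_def by auto
      then have "E' v c" using pq NH_def by auto
      then have "E c v" using E'in EE by blast
      then show ?thesis unfolding dist_le_def using v B_def
        by (intro exI[of _ "[c, v]"]) (auto simp: nth_Cons split: nat.splits)
    qed
  next
    fix c assume "c \<in> H" then show "c \<in> B c" unfolding B_def by auto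
  next
    fix c assume "c \<in> H" then show "B c \<subseteq> V" unfolding B_def L_def using HV VV by auto
  next
    fix c c' assume "c \<in> H" "c' \<in> H" "c \<noteq> c'"
    then show "B c \<inter> B c' = {}" unfolding B_def L_def by auto
  next
    show "H \<subseteq> H" by simp
  next
    show "H \<noteq> {}" by (rule Hne)
  next
    show "sgraph H F" unfolding sgraph_def F_def using finH E'in by blast
  next
    fix c c' assume "F c c'" then show "\<exists>x\<in>B c. \<exists>y\<in>B c'. E x y" unfolding F_def using EE by blast
  qed
  have hpos: "card H > 0" using finH Hne by (simp add: card_gt_0_iff)
  have nab: "real (num_edges F) / real (card H) \<le> nabla 1 V E"
    unfolding nabla_def
    by (rule Max_ge[OF nabla_set_finite[OF finV]]) (use smd in blast)
  have "real (card H) * real (d+1) \<le> real (num_edges F) * (2 * real s)"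
  proof -
    have "card H * (d+1) \<le> num_edges F * (2 * s)" using low up m
      by (meson le_trans mult_le_mono1)
    then show ?thesis by (metis of_nat_le_iff of_nat_mult of_nat_numeral)
  qed
  then have "real (d+1) \<le> 2 * real s * (real (num_edges F) / real (card H))"
    using hpos by (simp add: field_simps)
  also have "\<dots> \<le> 2 * real s * nabla 1 V E" using nab by (intro mult_left_mono) auto
  finally have A: "real d + 1 \<le> 2 * real s * nabla 1 V E" by simp
  have "real d \<ge> of_int \<lfloor>2 * real s * nabla 1 V E\<rfloor>"
  proof (cases "\<lfloor>2 * real s * nabla 1 V E\<rfloor> \<ge> 0")
    case True
    then show ?thesis unfolding dd by (simp add: of_nat_nat)
  next
    case False
    have "real_of_int \<lfloor>2 * real s * nabla 1 V E\<rfloor> \<le> 0" using False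
      by (metis of_int_le_0_iff linorder_not_le less_imp_le)
    then show ?thesis by (metis of_nat_0_le_iff order_trans)
  qed
  moreover have "of_int \<lfloor>2 * real s * nabla 1 V E\<rfloor> > 2 * real s * nabla 1 V E - 1" by linarith
  ultimately show False using A by linarith
qed

theorem proposition3p2:
  fixes V :: "'a set" and E :: "'a \<Rightarrow> 'a \<Rightarrow> bool" and s :: nat
  assumes "sgraph V E" and "s \<ge> 2" and "K2s_free s V E"
  shows "strongly_degenerate (nat \<lfloor>2 * real s * nabla 1 V E\<rfloor>) V E"
  unfolding strongly_degenerate_def
proof (intro allI impI)
  fix V' E' assume h: "subgraph V' E' V E \<and> V' \<noteq> {}"
  show "\<exists>v\<in>V'. d_removable (nat \<lfloor>2 * real s * nabla 1 V E\<rfloor>) V' E' v"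
    using core[OF assms, of V' E' "nat \<lfloor>2 * real s * nabla 1 V E\<rfloor>"] h by blast
qed

end
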